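(* Let $\psi_1,\psi_2$ be real random fields on $\mathbb{R}^2$ and $k_R>0$, and let $E(k)$, $G_1(k)$, $G_2(k)$, $P(k)$, $\Gamma(k)$ be as defined in the context. Then for every wavenumber $k\in(0,+\infty)$ with $E(k)>0$, \[ |2\Gamma(k)-1| \le \frac{k^2+[1-P(k)]\,k_R^2}{k^2+k_R^2\,P(k)}. \]
   Context: Two-layer quasi-geostrophic setting. $\psi_1,\psi_2$ are the (random) streamfunctions of the upper and lower layer, real fields on $\mathbb{R}^2$ with Fourier transforms $\hat\psi_\alpha$, so that $\psi_\alpha(\mathbf{x})=\int_{\mathbb{R}^2}\hat\psi_\alpha(\mathbf{k})e^{i\mathbf{k}\cdot\mathbf{x}}\,d\mathbf{k}$; $\langle\cdot\rangle$ denotes ensemble average. For fields $a,b$ and $k>0$ define the bracket \[ \langle a,b\rangle_k=\frac12\int_{A\in SO(2)} d\Omega(A)\; k\,\big\langle \hat a(kA\mathbf{e})\overline{\hat b(kA\mathbf{e})}+\overline{\hat a(kA\mathbf{e})}\hat b(kA\mathbf{e})\big\rangle, \] where $\mathbf{e}$ is a fixed unit vector and $d\Omega$ is the rotation-invariant measure on $SO(2)$; it is symmetric, bilinear, satisfies $\langle a,a\rangle_k\ge 0$ and $\langle \Delta a,b\rangle_k=\langle a,\Delta b\rangle_k=-k^2\langle a,b\rangle_k$. The potential vorticities are $q_1=\Delta\psi_1+\frac{k_R^2}{2}(\psi_2-\psi_1)$ and $q_2=\Delta\psi_2-\frac{k_R^2}{2}(\psi_2-\psi_1)$, with $k_R>0$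 the Rossby wavenumber (a constant Coriolis parameter does not contribute at $k>0$ and is omitted). Let $\psi=(\psi_1+\psi_2)/2$, $\tau=(\psi_1-\psi_2)/2$. Define the energy spectrum $E(k)=-\langle\psi_1,q_1\rangle_k-\langle\psi_2,q_2\rangle_k$, which equals $E_K(k)+E_P(k)$ with barotropic spectrum $E_K(k)=2k^2\langle\psi,\psi\rangle_k$ and baroclinic spectrum $E_P(k)=2(k^2+k_R^2)\langle\tau,\tau\rangle_k$. Define potential enstrophy spectra $G_\alpha(k)=\langle q_\alpha,q_\alpha\rangle_k$ and $G(k)=G_1(k)+G_2(k)$ (when $E(k)>0$ one has $G(k)>0$). For $k$ with $E(k)>0$ define $P(k)=E_P(k)/E(k)\in[0,1]$ (so $E_K=(1-P)E$) and $\Gamma(k)=G_1(k)/G(k)\in[0,1]$ (so $G_2=(1-\Gamma)G$). *)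

theory Defs
  imports "HOL-Probability.Probability"
begin

text \<open>A (random) field is represented by its Fourier transform: for each sample
  point \<omega> of the probability space and each wavevector \<kappa> in R^2 (modelled as
  real \<times> real) the complex amplitude.\<close>

type_synonym 'w field = "'w \<Rightarrow> real \<times> real \<Rightarrow> complex"

definition lap :: "'w field \<Rightarrow> 'w field" where
  "lap a = (\<lambda>\<omega> \<kappa>. - complex_of_real ((norm \<kappa>)\<^sup>2) * a \<omega> \<kappa>)"

text \<open>Wavevector k A e with e = (1,0) and A the rotation by angle \<theta>.\<close>
definition wv :: "real \<Rightarrow> real \<Rightarrow> real \<times> real" where
  "wv k \<theta> = (k * cos \<theta>, k * sin \<theta>)"

text \<open>The bracket: (1/2) \<integral>_{SO(2)} d\<Omega>(A) k < a(kAe) conj(b(kAe)) + conj(a(kAe)) b(kAe) >,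
  with SO(2) parametrised by \<theta> \<in> [0, 2\<pi>] and d\<Omega> = d\<theta> (the normalisation of the
  invariant measure is irrelevant for the statement).  The integrand
  a conj b + conj a b is real; we write it as the real part of itself.\<close>
definition bracket :: "'w measure \<Rightarrow> 'w field \<Rightarrow> 'w field \<Rightarrow> real \<Rightarrow> real" where
  "bracket M a b k = 1/2 * (LBINT \<theta>=0..2*pi. k * (LINT \<omega>|M.
      Re (a \<omega> (wv k \<theta>) * cnj (b \<omega> (wv k \<theta>)) + cnj (a \<omega> (wv k \<theta>)) * b \<omega> (wv k \<theta>))))"

definition q1 :: "real \<Rightarrow> 'w field \<Rightarrow> 'w field \<Rightarrow> 'w field" where
  "q1 kR psi1 psi2 = (\<lambda>\<omega> \<kappa>. lap psi1 \<omega> \<kappa> + complex_of_real (kR\<^sup>2 / 2) * (psi2 \<omega> \<kappa> - psi1 \<omega> \<kappa>))"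

definition q2 :: "real \<Rightarrow> 'w field \<Rightarrow> 'w field \<Rightarrow> 'w field" where
  "q2 kR psi1 psi2 = (\<lambda>\<omega> \<kappa>. lap psi2 \<omega> \<kappa> - complex_of_real (kR\<^sup>2 / 2) * (psi2 \<omega> \<kappa> - psi1 \<omega> \<kappa>))"

definition tau :: "'w field \<Rightarrow> 'w field \<Rightarrow> 'w field" where
  "tau psi1 psi2 = (\<lambda>\<omega> \<kappa>. (psi1 \<omega> \<kappa> - psi2 \<omega> \<kappa>) / 2)"

definition Espec :: "'w measure \<Rightarrow> real \<Rightarrow> 'w field \<Rightarrow> 'w field \<Rightarrow> real \<Rightarrow> real" where
  "Espec M kR psi1 psi2 k =
     - bracket M psi1 (q1 kR psi1 psi2) k - bracket M psi2 (q2 kR psi1 psi2) k"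

definition EPspec :: "'w measure \<Rightarrow> real \<Rightarrow> 'w field \<Rightarrow> 'w field \<Rightarrow> real \<Rightarrow> real" where
  "EPspec M kR psi1 psi2 k = 2 * (k\<^sup>2 + kR\<^sup>2) * bracket M (tau psi1 psi2) (tau psi1 psi2) k"

definition G1spec :: "'w measure \<Rightarrow> real \<Rightarrow> 'w field \<Rightarrow> 'w field \<Rightarrow> real \<Rightarrow> real" where
  "G1spec M kR psi1 psi2 k = bracket M (q1 kR psi1 psi2) (q1 kR psi1 psi2) k"

definition G2spec :: "'w measure \<Rightarrow> real \<Rightarrow> 'w field \<Rightarrow> 'w field \<Rightarrow> real \<Rightarrow> real" where
  "G2spec M kR psi1 psi2 k = bracket M (q2 kR psi1 psi2) (q2 kR psi1 psi2) k"

definition Gspec :: "'w measure \<Rightarrow> real \<Rightarrow> 'w field \<Rightarrow> 'w field \<Rightarrow> real \<Rightarrow> real" where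
  "Gspec M kR psi1 psi2 k = G1spec M kR psi1 psi2 k + G2spec M kR psi1 psi2 k"

definition Pratio :: "'w measure \<Rightarrow> real \<Rightarrow> 'w field \<Rightarrow> 'w field \<Rightarrow> real \<Rightarrow> real" where
  "Pratio M kR psi1 psi2 k = EPspec M kR psi1 psi2 k / Espec M kR psi1 psi2 k"

definition Gammaratio :: "'w measure \<Rightarrow> real \<Rightarrow> 'w field \<Rightarrow> 'w field \<Rightarrow> real \<Rightarrow> real" where
  "Gammaratio M kR psi1 psi2 k = G1spec M kR psi1 psi2 k / Gspec M kR psi1 psi2 k"

end

theory Submission
  imports Defs
begin

lemma norm_wv: "k > 0 \<Longrightarrow> (norm (wv k t))\<^sup>2 = k\<^sup>2"
  by (simp add: wv_def norm_prod_def power_mult_distrib) (metis distrib_left mult.right_neutral sin_cos_squared_add2)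

lemma pw:
  fixes u v :: complex and a1 a2 b1 b2 :: real
  shows "Re ((of_real a1 * u + of_real a2 * v) * cnj (of_real b1 * u + of_real b2 * v)
     + cnj (of_real a1 * u + of_real a2 * v) * (of_real b1 * u + of_real b2 * v))
   = 2*a1*b1*(cmod u)\<^sup>2 + 2*a2*b2*(cmod v)\<^sup>2 + 2*(a1*b2+a2*b1) * Re (u * cnj v)"
  by (cases u; cases v) (simp add: cmod_def power2_eq_square algebra_simps)

lemma bracket_prod:
  fixes g :: "'w \<Rightarrow> real \<Rightarrow> real"
  assumes P: "prob_space M"
    and int: "integrable (M \<Otimes>\<^sub>M lborel) (\<lambda>x. indicator {0<..<2*pi} (snd x) * g (fst x) (snd x))"
    and eq: "\<And>\<omega> t. Re (a \<omega> (wv k t) * cnj (b \<omega> (wv k t)) + cnj (a \<omega> (wv k t)) * b \<omega> (wv k t)) = g \<omega> t"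
  shows "bracket M a b k = 1/2 * k * integral\<^sup>L (M \<Otimes>\<^sub>M lborel) (\<lambda>x. indicator {0<..<2*pi} (snd x) * g (fst x) (snd x))"
proof -
  interpret prob_space M by (rule P)
  interpret pair_sigma_finite M lborel
    by (simp add: pair_sigma_finite_def sigma_finite_measure_axioms lborel.sigma_finite_measure_axioms)
  have int': "integrable (M \<Otimes>\<^sub>M lborel) (case_prod (\<lambda>w t. indicator {0<..<2*pi} t * g w t))"
    using int by (simp add: case_prod_beta')
  have "bracket M a b k = 1/2 * (LINT t:{0<..<2*pi}|lborel. k * (LINT w|M. g w t))"
    unfolding bracket_def interval_lebesgue_integral_def using eq by (simp add: zero_ereal_def)
  also have "\<dots> = 1/2 * (\<integral>t. k * (\<integral>w. indicator {0<..<2*pi} t * g w t \<partial>M) \<partial>lborel)"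
    unfolding set_lebesgue_integral_def by (simp add: algebra_simps)
  also have "\<dots> = 1/2 * k * (\<integral>t. (\<integral>w. indicator {0<..<2*pi} t * g w t \<partial>M) \<partial>lborel)"
    by simp
  also have "\<dots> = 1/2 * k * integral\<^sup>L (M \<Otimes>\<^sub>M lborel) (\<lambda>x. indicator {0<..<2*pi} (snd x) * g (fst x) (snd x))"
    using integral_snd[OF int'] by (simp add: case_prod_beta')
  finally show ?thesis .
qed

lemma alg:
  fixes k kR A B C :: real
  assumes k: "k > 0" and kR: "kR > 0" and A: "A \<ge> 0" and B: "B \<ge> 0" and C: "\<bar>2*C\<bar> \<le> A + B"
    and m: "m = k\<^sup>2 + kR\<^sup>2"
    and E: "E = k*(2*k\<^sup>2*A + 2*m*B)" and Epos: "E > 0"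
    and EP: "EP = 2*m*k*B"
    and G1: "G1 = k*(k^4*A + 2*k\<^sup>2*m*C + m\<^sup>2*B)"
    and G2: "G2 = k*(k^4*A - 2*k\<^sup>2*m*C + m\<^sup>2*B)"
  shows "\<bar>2 * (G1 / (G1 + G2)) - 1\<bar> \<le> (k\<^sup>2 + (1 - EP / E) * kR\<^sup>2) / (k\<^sup>2 + kR\<^sup>2 * (EP / E))"
proof -
  have mpos: "m > 0" using m k kR by (simp add: add_pos_pos)
  have k2: "k\<^sup>2 > 0" using k by simp
  have S: "k\<^sup>2*A + m*B > 0" using Epos E k by (simp add: zero_less_mult_iff)
  have "A > 0 \<or> B > 0" using S A B by (metis add.right_neutral less_eq_real_def mult_zero_right)
  hence D: "k^4*A + m\<^sup>2*B > 0" using A B mpos k2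
    by (auto intro: add_pos_nonneg add_nonneg_pos simp: zero_less_mult_iff)
  have G: "G1 + G2 = 2*k*(k^4*A + m\<^sup>2*B)" using G1 G2 by (simp add: algebra_simps)
  have L: "2 * (G1 / (G1 + G2)) - 1 = 2*k\<^sup>2*m*C / (k^4*A + m\<^sup>2*B)"
  proof -
    have Gp: "G1 + G2 > 0" using G D k by simp
    have "2 * (G1 / (G1 + G2)) - 1 = (2*G1 - (G1+G2)) / (G1+G2)" using Gp by (simp add: field_simps)
    also have "\<dots> = ((2*k)*(2*k\<^sup>2*m*C)) / ((2*k)*(k^4*A + m\<^sup>2*B))"
    proof -
      have n: "2*G1 - (G1+G2) = (2*k)*(2*k\<^sup>2*m*C)" using G1 G2 by (simp add: algebra_simps)
      show ?thesis by (subst n) (simp only: G)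
    qed
    also have "\<dots> = (2*k\<^sup>2*m*C) / (k^4*A + m\<^sup>2*B)"
      using k by (rule_tac nonzero_mult_divide_mult_cancel_left) simp
    finally show ?thesis .
  qed
  have Ediv: "EP / E = m*B / (k\<^sup>2*A + m*B)"
  proof -
    have "EP / E = ((2*k)*(m*B)) / ((2*k)*(k\<^sup>2*A + m*B))"
      using E EP by (simp add: algebra_simps)
    also have "\<dots> = m*B / (k\<^sup>2*A + m*B)"
      using k by (rule_tac nonzero_mult_divide_mult_cancel_left) simp
    finally show ?thesis .
  qed
  have R: "(k\<^sup>2 + (1 - EP / E) * kR\<^sup>2) / (k\<^sup>2 + kR\<^sup>2 * (EP / E)) = k\<^sup>2*m*(A+B) / (k^4*A + m\<^sup>2*B)"
  proof -
    have d1: "k\<^sup>2 + kR\<^sup>2 * (m*B / (k\<^sup>2*A + m*B)) = (k^4*A + m\<^sup>2*B) / (k\<^sup>2*A + m*B)"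
      using S m by (simp add: field_simps) (simp add: algebra_simps power2_eq_square power4_eq_xxxx)
    have n1: "k\<^sup>2 + (1 - m*B / (k\<^sup>2*A + m*B)) * kR\<^sup>2 = k\<^sup>2*m*(A+B) / (k\<^sup>2*A + m*B)"
      using S m by (simp add: field_simps)
    have cc: "\<And>x y s::real. s \<noteq> 0 \<Longrightarrow> (x/s)/(y/s) = x/y" by (simp add: field_simps)
    show ?thesis unfolding Ediv d1 n1 using S by (intro cc) simp
  qed
  have "\<bar>2*k\<^sup>2*m*C\<bar> \<le> k\<^sup>2*m*(A+B)"
  proof -
    have "\<bar>2*k\<^sup>2*m*C\<bar> = k\<^sup>2*m*\<bar>2*C\<bar>" using mpos by (simp add: abs_mult)
    also have "\<dots> \<le> k\<^sup>2*m*(A+B)" using C mpos k2 by (simp add: mult_left_mono)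
    finally show ?thesis .
  qed
  then show ?thesis unfolding L R using D by (simp add: divide_right_mono)
qed

lemma bracket_lin:
  fixes M :: "'w measure" and psi1 psi2 a b :: "'w field" and a1 a2 b1 b2 k :: real
  assumes P: "prob_space M"
    and iX: "integrable (M \<Otimes>\<^sub>M lborel) (\<lambda>x. indicator {0<..<2*pi} (snd x) * (cmod (psi1 (fst x) (wv k (snd x))))\<^sup>2)"
    and iY: "integrable (M \<Otimes>\<^sub>M lborel) (\<lambda>x. indicator {0<..<2*pi} (snd x) * (cmod (psi2 (fst x) (wv k (snd x))))\<^sup>2)"
    and iZ: "integrable (M \<Otimes>\<^sub>M lborel) (\<lambda>x. indicator {0<..<2*pi} (snd x) * Re (psi1 (fst x) (wv k (snd x)) * cnj (psi2 (fst x) (wv k (snd x)))))"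
    and ha: "\<And>\<omega> t. a \<omega> (wv k t) = of_real a1 * psi1 \<omega> (wv k t) + of_real a2 * psi2 \<omega> (wv k t)"
    and hb: "\<And>\<omega> t. b \<omega> (wv k t) = of_real b1 * psi1 \<omega> (wv k t) + of_real b2 * psi2 \<omega> (wv k t)"
  shows "bracket M a b k = k * (a1*b1 * integral\<^sup>L (M \<Otimes>\<^sub>M lborel) (\<lambda>x. indicator {0<..<2*pi} (snd x) * (cmod (psi1 (fst x) (wv k (snd x))))\<^sup>2)
     + a2*b2 * integral\<^sup>L (M \<Otimes>\<^sub>M lborel) (\<lambda>x. indicator {0<..<2*pi} (snd x) * (cmod (psi2 (fst x) (wv k (snd x))))\<^sup>2)
     + (a1*b2+a2*b1) * integral\<^sup>L (M \<Otimes>\<^sub>M lborel) (\<lambda>x. indicator {0<..<2*pi} (snd x) * Re (psi1 (fst x) (wv k (snd x)) * cnj (psi2 (fst x) (wv k (snd x))))))"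
proof -
  define g where "g = (\<lambda>\<omega> t. 2*a1*b1*(cmod (psi1 \<omega> (wv k t)))\<^sup>2 + 2*a2*b2*(cmod (psi2 \<omega> (wv k t)))\<^sup>2
      + 2*(a1*b2+a2*b1) * Re (psi1 \<omega> (wv k t) * cnj (psi2 \<omega> (wv k t))))"
  let ?X = "\<lambda>x. indicator {0<..<2*pi} (snd x) * (cmod (psi1 (fst x) (wv k (snd x))))\<^sup>2"
  let ?Y = "\<lambda>x. indicator {0<..<2*pi} (snd x) * (cmod (psi2 (fst x) (wv k (snd x))))\<^sup>2"
  let ?Z = "\<lambda>x. indicator {0<..<2*pi} (snd x) * Re (psi1 (fst x) (wv k (snd x)) * cnj (psi2 (fst x) (wv k (snd x))))"
  have feq: "(\<lambda>x. indicator {0<..<2*pi} (snd x) * g (fst x) (snd x)) =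
      (\<lambda>x. (2*a1*b1) * ?X x + (2*a2*b2) * ?Y x + (2*(a1*b2+a2*b1)) * ?Z x)"
    unfolding g_def by (auto simp: algebra_simps)
  have int: "integrable (M \<Otimes>\<^sub>M lborel) (\<lambda>x. indicator {0<..<2*pi} (snd x) * g (fst x) (snd x))"
    unfolding feq using iX iY iZ by simp
  have eq: "\<And>\<omega> t. Re (a \<omega> (wv k t) * cnj (b \<omega> (wv k t)) + cnj (a \<omega> (wv k t)) * b \<omega> (wv k t)) = g \<omega> t"
    unfolding ha hb g_def by (rule pw)
  have "bracket M a b k = 1/2 * k * integral\<^sup>L (M \<Otimes>\<^sub>M lborel) (\<lambda>x. indicator {0<..<2*pi} (snd x) * g (fst x) (snd x))"
    by (rule bracket_prod[OF P int eq])
  also have "integral\<^sup>L (M \<Otimes>\<^sub>M lborel) (\<lambda>x. indicator {0<..<2*pi} (snd x) * g (fst x) (snd x))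
     = (2*a1*b1) * integral\<^sup>L (M \<Otimes>\<^sub>M lborel) ?X + (2*a2*b2) * integral\<^sup>L (M \<Otimes>\<^sub>M lborel) ?Y
       + (2*(a1*b2+a2*b1)) * integral\<^sup>L (M \<Otimes>\<^sub>M lborel) ?Z"
    unfolding feq using iX iY iZ
    by (simp add: integral_add integrable_add integrable_mult_right)
  finally show ?thesis by (simp add: algebra_simps)
qed

lemma bracket_nonneg: "k > 0 \<Longrightarrow> bracket M a a k \<ge> 0"
  unfolding bracket_def interval_lebesgue_integral_def set_lebesgue_integral_def
  by (auto simp: zero_ereal_def intro!: integral_nonneg mult_nonneg_nonneg)

theorem proposition1:
  fixes M :: "'w measure" and psi1 psi2 :: "'w field" and kR k :: real
  assumes "prob_space M"
    and "kR > 0"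
    and real1: "\<And>\<omega> \<kappa>. psi1 \<omega> (- \<kappa>) = cnj (psi1 \<omega> \<kappa>)"
    and real2: "\<And>\<omega> \<kappa>. psi2 \<omega> (- \<kappa>) = cnj (psi2 \<omega> \<kappa>)"
    and "k > 0"
    and meas1: "(\<lambda>x. psi1 (fst x) (wv k (snd x))) \<in> borel_measurable (M \<Otimes>\<^sub>M lborel)"
    and meas2: "(\<lambda>x. psi2 (fst x) (wv k (snd x))) \<in> borel_measurable (M \<Otimes>\<^sub>M lborel)"
    and sq1: "integrable (M \<Otimes>\<^sub>M lborel)
                (\<lambda>x. indicator {0..2*pi} (snd x) * (cmod (psi1 (fst x) (wv k (snd x))))\<^sup>2)"
    and sq2: "integrable (M \<Otimes>\<^sub>M lborel)
                (\<lambda>x. indicator {0..2*pi} (snd x) * (cmod (psi2 (fst x) (wv k (snd x))))\<^sup>2)"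
    and "Espec M kR psi1 psi2 k > 0"
  shows "\<bar>2 * Gammaratio M kR psi1 psi2 k - 1\<bar>
           \<le> (k\<^sup>2 + (1 - Pratio M kR psi1 psi2 k) * kR\<^sup>2) / (k\<^sup>2 + kR\<^sup>2 * Pratio M kR psi1 psi2 k)"
proof -
  note [measurable] = meas1 meas2
  let ?N = "M \<Otimes>\<^sub>M lborel"
  let ?I = "\<lambda>x. indicator {0<..<2*pi} (snd x) :: real"
  let ?J = "\<lambda>x. indicator {0..2*pi} (snd x) :: real"
  let ?u = "\<lambda>x. psi1 (fst x) (wv k (snd x))"
  let ?v = "\<lambda>x. psi2 (fst x) (wv k (snd x))"
  have [measurable]: "(\<lambda>x. cnj (?v x)) \<in> borel_measurable ?N"
    by (rule borel_measurable_continuous_on[OF continuous_on_cnj[OF continuous_on_id] meas2])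
  have IJ: "?I x \<le> ?J x" for x by (auto simp: indicator_def)
  have I01: "0 \<le> ?I x" "?I x \<le> 1" for x by (auto simp: indicator_def)
  have iX: "integrable ?N (\<lambda>x. ?I x * (cmod (?u x))\<^sup>2)"
  proof (rule Bochner_Integration.integrable_bound[OF sq1])
    show "(\<lambda>x. ?I x * (cmod (?u x))\<^sup>2) \<in> borel_measurable ?N" by measurable
    show "AE x in ?N. norm (?I x * (cmod (?u x))\<^sup>2) \<le> norm (?J x * (cmod (?u x))\<^sup>2)"
      using IJ I01 by (auto simp: abs_mult intro!: mult_right_mono)
  qed
  have iY: "integrable ?N (\<lambda>x. ?I x * (cmod (?v x))\<^sup>2)"
  proof (rule Bochner_Integration.integrable_bound[OF sq2])
    show "(\<lambda>x. ?I x * (cmod (?v x))\<^sup>2) \<in> borel_measurable ?N" by measurable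
    show "AE x in ?N. norm (?I x * (cmod (?v x))\<^sup>2) \<le> norm (?J x * (cmod (?v x))\<^sup>2)"
      using IJ I01 by (auto simp: abs_mult intro!: mult_right_mono)
  qed
  have iZ: "integrable ?N (\<lambda>x. ?I x * Re (?u x * cnj (?v x)))"
  proof (rule Bochner_Integration.integrable_bound[OF Bochner_Integration.integrable_add[OF sq1 sq2]])
    show "(\<lambda>x. ?I x * Re (?u x * cnj (?v x))) \<in> borel_measurable ?N" by measurable
    show "AE x in ?N. norm (?I x * Re (?u x * cnj (?v x))) \<le> norm (?J x * (cmod (?u x))\<^sup>2 + ?J x * (cmod (?v x))\<^sup>2)"
    proof (intro AE_I2)
      fix x
      have r: "\<bar>Re (?u x * cnj (?v x))\<bar> \<le> (cmod (?u x))\<^sup>2 + (cmod (?v x))\<^sup>2"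
      proof -
        have "\<bar>Re (?u x * cnj (?v x))\<bar> \<le> cmod (?u x * cnj (?v x))" by (rule abs_Re_le_cmod)
        also have "\<dots> = cmod (?u x) * cmod (?v x)" by (simp add: norm_mult)
        also have "\<dots> \<le> (cmod (?u x))\<^sup>2 + (cmod (?v x))\<^sup>2"
          using sum_squares_bound[of "cmod (?u x)" "cmod (?v x)"] mult_nonneg_nonneg[OF norm_ge_zero norm_ge_zero, of "?u x" "?v x"]
          unfolding power2_eq_square by linarith
        finally show ?thesis .
      qed
      show "norm (?I x * Re (?u x * cnj (?v x))) \<le> norm (?J x * (cmod (?u x))\<^sup>2 + ?J x * (cmod (?v x))\<^sup>2)"
        using r by (cases "snd x \<in> {0<..<2*pi}") (auto simp: indicator_def)
    qed
  qed
  define X where "X = integral\<^sup>L ?N (\<lambda>x. ?I x * (cmod (?u x))\<^sup>2)"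
  define Y where "Y = integral\<^sup>L ?N (\<lambda>x. ?I x * (cmod (?v x))\<^sup>2)"
  define Z where "Z = integral\<^sup>L ?N (\<lambda>x. ?I x * Re (?u x * cnj (?v x)))"
  note BL = bracket_lin[OF assms(1) iX iY iZ, folded X_def Y_def Z_def]
  have nw: "\<And>t. complex_of_real ((norm (wv k t))\<^sup>2) = of_real (k\<^sup>2)" using norm_wv[OF \<open>k > 0\<close>] by simp
  have r1: "\<And>\<omega> t. psi1 \<omega> (wv k t) = of_real 1 * psi1 \<omega> (wv k t) + of_real 0 * psi2 \<omega> (wv k t)" by simp
  have r2: "\<And>\<omega> t. psi2 \<omega> (wv k t) = of_real 0 * psi1 \<omega> (wv k t) + of_real 1 * psi2 \<omega> (wv k t)" by simp
  have rq1: "\<And>\<omega> t. q1 kR psi1 psi2 \<omega> (wv k t) = of_real (-k\<^sup>2 - kR\<^sup>2/2) * psi1 \<omega> (wv k t) + of_real (kR\<^sup>2/2) * psi2 \<omega> (wv k t)"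
    unfolding q1_def lap_def nw by (simp add: algebra_simps)
  have rq2: "\<And>\<omega> t. q2 kR psi1 psi2 \<omega> (wv k t) = of_real (kR\<^sup>2/2) * psi1 \<omega> (wv k t) + of_real (-k\<^sup>2 - kR\<^sup>2/2) * psi2 \<omega> (wv k t)"
    unfolding q2_def lap_def nw by (simp add: algebra_simps)
  have rt: "\<And>\<omega> t. tau psi1 psi2 \<omega> (wv k t) = of_real (1/2) * psi1 \<omega> (wv k t) + of_real (-1/2) * psi2 \<omega> (wv k t)"
    unfolding tau_def by (simp add: field_simps)
  define ps where "ps = (\<lambda>\<omega> \<kappa>. (psi1 \<omega> \<kappa> + psi2 \<omega> \<kappa>) / 2)"
  have rp: "\<And>\<omega> t. ps \<omega> (wv k t) = of_real (1/2) * psi1 \<omega> (wv k t) + of_real (1/2) * psi2 \<omega> (wv k t)"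
    unfolding ps_def by (simp add: field_simps)
  define A where "A = (X + Y + 2*Z)/4"
  define B where "B = (X + Y - 2*Z)/4"
  define C where "C = (X - Y)/4"
  have b11: "bracket M psi1 psi1 k = k*X" using BL[OF r1 r1] by simp
  have b22: "bracket M psi2 psi2 k = k*Y" using BL[OF r2 r2] by simp
  have bpp: "bracket M ps ps k = k*A" using BL[OF rp rp] unfolding A_def by (simp add: algebra_simps)
  have btt: "bracket M (tau psi1 psi2) (tau psi1 psi2) k = k*B" using BL[OF rt rt] unfolding B_def by (simp add: algebra_simps)
  have X0: "X \<ge> 0" using bracket_nonneg[OF \<open>k > 0\<close>, of M psi1] b11 \<open>k > 0\<close> by (simp add: zero_le_mult_iff)
  have Y0: "Y \<ge> 0" using bracket_nonneg[OF \<open>k > 0\<close>, of M psi2] b22 \<open>k > 0\<close> by (simp add: zero_le_mult_iff)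
  have A0: "A \<ge> 0" using bracket_nonneg[OF \<open>k > 0\<close>, of M ps] bpp \<open>k > 0\<close> by (simp add: zero_le_mult_iff)
  have B0: "B \<ge> 0" using bracket_nonneg[OF \<open>k > 0\<close>, of M "tau psi1 psi2"] btt \<open>k > 0\<close> by (simp add: zero_le_mult_iff)
  have Cb: "\<bar>2*C\<bar> \<le> A + B"
  proof -
    have e: "A+B = (X+Y)/2" "2*C = (X-Y)/2" unfolding A_def B_def C_def by (simp_all add: field_simps)
    show ?thesis unfolding e using X0 Y0 by (simp add: abs_le_iff)
  qed
  define m where "m = k\<^sup>2 + kR\<^sup>2"
  have E: "Espec M kR psi1 psi2 k = k*(2*k\<^sup>2*A + 2*m*B)"
    unfolding Espec_def BL[OF r1 rq1] BL[OF r2 rq2] A_def B_def m_def by (simp add: field_simps)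
  have EP: "EPspec M kR psi1 psi2 k = 2*m*k*B"
    unfolding EPspec_def btt m_def by (simp add: algebra_simps)
  have G1: "G1spec M kR psi1 psi2 k = k*(k^4*A + 2*k\<^sup>2*m*C + m\<^sup>2*B)"
    unfolding G1spec_def BL[OF rq1 rq1] A_def B_def C_def m_def by (simp add: field_simps power2_eq_square power4_eq_xxxx)
  have G2: "G2spec M kR psi1 psi2 k = k*(k^4*A - 2*k\<^sup>2*m*C + m\<^sup>2*B)"
    unfolding G2spec_def BL[OF rq2 rq2] A_def B_def C_def m_def by (simp add: field_simps power2_eq_square power4_eq_xxxx)
  show ?thesis
    unfolding Gammaratio_def Gspec_def Pratio_def
    by (rule alg[OF \<open>k > 0\<close> \<open>kR > 0\<close> A0 B0 Cb m_def E \<open>Espec M kR psi1 psi2 k > 0\<close> EP G1 G2])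
qed

end
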